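(* Let $\mathcal{O}$ be an oriented matroid of rank $r$ on $E$, $f\in E$, $I=[e_1,\dots,e_k]$ ($k\le r$) an ordered set of independent elements (possibly $f\in I$), and $\mathcal{O}'=\mathcal{O}\cup p=\mathcal{O}[e_1^+,\dots,e_k^+]$. Let $X,Y$ be conformal cocircuits of $\mathcal{O}'$ with $X_p=Y_p\neq 0$ and $X\circ Y$ an edge of $\mathcal{O}'$, with $Y_f\neq 0$, and suppose the index $i$ of $X$ and the index $j$ of $Y$ with respect to $I$ satisfy $1\le i<j\le k$. Then $\mathrm{Dir}_{(\mathcal{O}',p,f)}(X,Y)=\mathrm{Dir}_{(\mathcal{O}',e_i,f)}(X,Y)=Y_f$.
   Context: Oriented matroid $\mathcal{O}$ of rank $r$ on finite $E$, given by its cocircuits (sign vectors in $\{+,-,0\}^E$). Notation: $z(X)$ zero set, $\operatorname{sep}(X,Y)=\{e:X_e=-Y_e\ne0\}$, $(X\circ Y)_e=X_e$ if $X_e\ne0$, else $Y_e$; conformal means $\operatorname{sep}=\emptyset$. An edge is a covector whose zero set is a flat of rank $r-2$; cocircuits $X\ne\pm Y$ are comodular if $X\circ Y$ is an edge. For comodular $X,Y$ and $e\in\operatorname{sep}(X,Y)$, cocircuit elimination of $e$ between $X$ and $Y$ yields the unique cocircuit $Z$ with $Z_e=0$ and $Z_h=(X\circ Y)_h$ for $h\notin\operatorname{sep}(X,Y)$. For an oriented matroid $\mathcal{Q}$ on ground set $E'$, distinct $a,b\in E'$ and comodular cocircuits $X,Y$ of $\mathcal{Q}$ with $X_a=Y_a\ne0$,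 let $Z$ be obtained by eliminating $a$ between $-X$ and $Y$ and set $\mathrm{Dir}_{(\mathcal{Q},a,b)}(X,Y)=Z_b$; if $X_a\ne0$ and $Y_a=0$ set $\mathrm{Dir}_{(\mathcal{Q},a,b)}(X,Y)=Y_b$, and if $X_a=0$, $Y_a\neq 0$ set it to $-X_b$. The index of a cocircuit $Y$ w.r.t. $I=[e_1,\dots,e_k]$ is the smallest $i$ with $Y_{e_i}\ne0$, or $k+1$ if none. The positive lexicographic extension $\mathcal{O}[e_1^+,\dots,e_k^+]=\mathcal{O}\cup p$ is the single-element extension with localization $\sigma(Y)=Y_{e_i}$ if the index $i$ of $Y$ is $\le k$, and $\sigma(Y)=0$ otherwise. *)

theory Defs
  imports Main
begin

datatype sign = Neg | Zer | Pos

fun neg_sign :: "sign \<Rightarrow> sign" where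
  "neg_sign Neg = Pos" | "neg_sign Zer = Zer" | "neg_sign Pos = Neg"

type_synonym 'e svec = "'e \<Rightarrow> sign"

definition zerov :: "'e svec" where "zerov = (\<lambda>e. Zer)"

definition negv :: "'e svec \<Rightarrow> 'e svec" where "negv X = (\<lambda>e. neg_sign (X e))"

definition supp :: "'e svec \<Rightarrow> 'e set" where "supp X = {e. X e \<noteq> Zer}"

definition zset :: "'e set \<Rightarrow> 'e svec \<Rightarrow> 'e set" where "zset E X = {e \<in> E. X e = Zer}"

definition sep :: "'e svec \<Rightarrow> 'e svec \<Rightarrow> 'e set" where
  "sep X Y = {e. X e \<noteq> Zer \<and> X e = neg_sign (Y e)}"

definition comp :: "'e svec \<Rightarrow> 'e svec \<Rightarrow> 'e svec" where
  "comp X Y = (\<lambda>e. if X e \<noteq> Zer then X e else Y e)"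

definition conformal :: "'e svec \<Rightarrow> 'e svec \<Rightarrow> bool" where
  "conformal X Y \<longleftrightarrow> sep X Y = {}"

definition oriented_matroid :: "'e set \<Rightarrow> 'e svec set \<Rightarrow> bool" where
  "oriented_matroid E C \<longleftrightarrow>
     finite E \<and>
     (\<forall>X\<in>C. \<forall>e. e \<notin> E \<longrightarrow> X e = Zer) \<and>
     zerov \<notin> C \<and>
     (\<forall>X\<in>C. negv X \<in> C) \<and>
     (\<forall>X\<in>C. \<forall>Y\<in>C. supp X \<subseteq> supp Y \<longrightarrow> X = Y \<or> X = negv Y) \<and>
     (\<forall>X\<in>C. \<forall>Y\<in>C. \<forall>e. X \<noteq> negv Y \<and> e \<in> sep X Y \<longrightarrow>
        (\<exists>Z\<in>C. Z e = Zer \<and> (\<forall>g. Z g = Pos \<longrightarrow> X g = Pos \<or> Y g = Pos)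
                          \<and> (\<forall>g. Z g = Neg \<longrightarrow> X g = Neg \<or> Y g = Neg)))"

inductive_set covectors :: "'e svec set \<Rightarrow> 'e svec set" for C where
  zero: "zerov \<in> covectors C"
| step: "X \<in> C \<Longrightarrow> V \<in> covectors C \<Longrightarrow> comp X V \<in> covectors C"

text \<open>Underlying matroid: bases are the minimal transversals of the cocircuit supports.\<close>
definition is_basis :: "'e set \<Rightarrow> 'e svec set \<Rightarrow> 'e set \<Rightarrow> bool" where
  "is_basis E C B \<longleftrightarrow> B \<subseteq> E \<and> (\<forall>X\<in>C. B \<inter> supp X \<noteq> {}) \<and>
     (\<forall>B'. B' \<subset> B \<longrightarrow> (\<exists>X\<in>C. B' \<inter> supp X = {}))"

definition indep :: "'e set \<Rightarrow> 'e svec set \<Rightarrow> 'e set \<Rightarrow> bool" where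
  "indep E C A \<longleftrightarrow> (\<exists>B. is_basis E C B \<and> A \<subseteq> B)"

definition mrank :: "'e set \<Rightarrow> 'e svec set \<Rightarrow> 'e set \<Rightarrow> nat" where
  "mrank E C A = Max (card ` {J. J \<subseteq> A \<and> indep E C J})"

definition om_rank :: "'e set \<Rightarrow> 'e svec set \<Rightarrow> nat" where
  "om_rank E C = mrank E C E"

definition is_flat :: "'e set \<Rightarrow> 'e svec set \<Rightarrow> 'e set \<Rightarrow> bool" where
  "is_flat E C F \<longleftrightarrow> F \<subseteq> E \<and> (\<forall>e\<in>E - F. mrank E C (insert e F) > mrank E C F)"

definition is_edge :: "'e set \<Rightarrow> 'e svec set \<Rightarrow> 'e svec \<Rightarrow> bool" where
  "is_edge E C V \<longleftrightarrow> V \<in> covectors C \<and> is_flat E C (zset E V) \<and>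
     mrank E C (zset E V) + 2 = om_rank E C"

definition elim :: "'e svec set \<Rightarrow> 'e \<Rightarrow> 'e svec \<Rightarrow> 'e svec \<Rightarrow> 'e svec" where
  "elim C e X Y = (THE Z. Z \<in> C \<and> Z e = Zer \<and> (\<forall>h. h \<notin> sep X Y \<longrightarrow> Z h = comp X Y h))"

definition Dir :: "'e svec set \<Rightarrow> 'e \<Rightarrow> 'e \<Rightarrow> 'e svec \<Rightarrow> 'e svec \<Rightarrow> sign" where
  "Dir C a b X Y =
     (if X a = Y a \<and> X a \<noteq> Zer then elim C a (negv X) Y b
      else if X a \<noteq> Zer \<and> Y a = Zer then Y b
      else if X a = Zer \<and> Y a \<noteq> Zer then neg_sign (X b)
      else undefined)"

text \<open>1-based index of Y w.r.t. I = [e_1,...,e_k]; k+1 if Y vanishes on all e_i.\<close>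
definition cc_index :: "'e list \<Rightarrow> 'e svec \<Rightarrow> nat" where
  "cc_index I Y = (if \<exists>i<length I. Y (I ! i) \<noteq> Zer
                   then Suc (LEAST i. i < length I \<and> Y (I ! i) \<noteq> Zer)
                   else Suc (length I))"

definition lex_sigma :: "'e list \<Rightarrow> 'e svec \<Rightarrow> sign" where
  "lex_sigma I Y = (if cc_index I Y \<le> length I then Y (I ! (cc_index I Y - 1)) else Zer)"

definition restr :: "'e set \<Rightarrow> 'e svec \<Rightarrow> 'e svec" where
  "restr E X = (\<lambda>e. if e \<in> E then X e else Zer)"

definition deletion_cocircuits :: "'e set \<Rightarrow> 'e svec set \<Rightarrow> 'e svec set" where
  "deletion_cocircuits E C' =
     (let D = {restr E X | X. X \<in> C' \<and> restr E X \<noteq> zerov}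
      in {V \<in> D. \<forall>W\<in>D. supp W \<subseteq> supp V \<longrightarrow> supp W = supp V})"

definition ext_vec :: "'e set \<Rightarrow> 'e \<Rightarrow> 'e svec \<Rightarrow> sign \<Rightarrow> 'e svec" where
  "ext_vec E p Y s = (\<lambda>e. if e \<in> E then Y e else if e = p then s else Zer)"

definition single_element_extension ::
  "'e set \<Rightarrow> 'e svec set \<Rightarrow> 'e \<Rightarrow> ('e svec \<Rightarrow> sign) \<Rightarrow> 'e svec set \<Rightarrow> bool" where
  "single_element_extension E C p \<sigma> C' \<longleftrightarrow>
     p \<notin> E \<and> oriented_matroid (insert p E) C' \<and>
     om_rank (insert p E) C' = om_rank E C \<and>
     deletion_cocircuits E C' = C \<and>
     (\<forall>Y\<in>C. ext_vec E p Y (\<sigma> Y) \<in> C')"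

definition lex_extension :: "'e set \<Rightarrow> 'e svec set \<Rightarrow> 'e list \<Rightarrow> 'e \<Rightarrow> 'e svec set \<Rightarrow> bool" where
  "lex_extension E C I p C' \<longleftrightarrow> single_element_extension E C p (lex_sigma I) C'"

end

theory Submission
  imports Defs
begin

lemma neg_sign_neg[simp]: "neg_sign (neg_sign s) = s" by (cases s) auto
lemma neg_sign_Zer_iff[simp]: "neg_sign s = Zer \<longleftrightarrow> s = Zer" by (cases s) auto
lemma neg_sign_inj[simp]: "neg_sign s = neg_sign t \<longleftrightarrow> s = t" by (cases s; cases t) auto
lemma neg_sign_fix: "neg_sign s = s \<longleftrightarrow> s = Zer" by (cases s) auto
lemma negv_app[simp]: "negv X e = neg_sign (X e)" by (simp add: negv_def)

lemma om_parts:
  assumes "oriented_matroid E C"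
  shows "finite E" "\<forall>X\<in>C. \<forall>e. e \<notin> E \<longrightarrow> X e = Zer" "zerov \<notin> C" "\<forall>X\<in>C. negv X \<in> C"
    "\<forall>X\<in>C. \<forall>Y\<in>C. supp X \<subseteq> supp Y \<longrightarrow> X = Y \<or> X = negv Y"
    "\<forall>X\<in>C. \<forall>Y\<in>C. \<forall>e. X \<noteq> negv Y \<and> e \<in> sep X Y \<longrightarrow>
        (\<exists>Z\<in>C. Z e = Zer \<and> (\<forall>g. Z g = Pos \<longrightarrow> X g = Pos \<or> Y g = Pos)
                          \<and> (\<forall>g. Z g = Neg \<longrightarrow> X g = Neg \<or> Y g = Neg))"
proof -
  note A = assms[unfolded oriented_matroid_def]
  show "finite E" using conjunct1[OF A] .
  show "\<forall>X\<in>C. \<forall>e. e \<notin> E \<longrightarrow> X e = Zer" using conjunct1[OF conjunct2[OF A]] .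
  show "zerov \<notin> C" using conjunct1[OF conjunct2[OF conjunct2[OF A]]] .
  show "\<forall>X\<in>C. negv X \<in> C" using conjunct1[OF conjunct2[OF conjunct2[OF conjunct2[OF A]]]] .
  show "\<forall>X\<in>C. \<forall>Y\<in>C. supp X \<subseteq> supp Y \<longrightarrow> X = Y \<or> X = negv Y"
    using conjunct1[OF conjunct2[OF conjunct2[OF conjunct2[OF conjunct2[OF A]]]]] .
  show "\<forall>X\<in>C. \<forall>Y\<in>C. \<forall>e. X \<noteq> negv Y \<and> e \<in> sep X Y \<longrightarrow>
        (\<exists>Z\<in>C. Z e = Zer \<and> (\<forall>g. Z g = Pos \<longrightarrow> X g = Pos \<or> Y g = Pos)
                          \<and> (\<forall>g. Z g = Neg \<longrightarrow> X g = Neg \<or> Y g = Neg))"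
    using conjunct2[OF conjunct2[OF conjunct2[OF conjunct2[OF conjunct2[OF A]]]]] .
qed

lemma om_outside: assumes "oriented_matroid E C" "X \<in> C" "e \<notin> E" shows "X e = Zer"
proof -
  have "\<forall>X\<in>C. \<forall>e. e \<notin> E \<longrightarrow> X e = Zer" by (rule om_parts(2)[OF assms(1)])
  then show ?thesis using assms(2,3) by simp
qed
lemma om_in: assumes "oriented_matroid E C" "X \<in> C" "X e \<noteq> Zer" shows "e \<in> E"
proof (rule ccontr)
  assume "e \<notin> E"
  then have "X e = Zer" by (rule om_outside[OF assms(1,2)])
  then show False using assms(3) by simp
qed
lemma om_negv: assumes "oriented_matroid E C" "X \<in> C" shows "negv X \<in> C"
proof -
  have "\<forall>X\<in>C. negv X \<in> C" by (rule om_parts(4)[OF assms(1)])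
  then show ?thesis using assms(2) by simp
qed
lemma om_supp: assumes "oriented_matroid E C" "X \<in> C" "Y \<in> C" "supp X \<subseteq> supp Y" shows "X = Y \<or> X = negv Y"
proof -
  have "\<forall>X\<in>C. \<forall>Y\<in>C. supp X \<subseteq> supp Y \<longrightarrow> X = Y \<or> X = negv Y" by (rule om_parts(5)[OF assms(1)])
  then show ?thesis using assms(2-4) by simp
qed
lemma om_elim: assumes "oriented_matroid E C" "X\<in>C" "Y\<in>C" "X \<noteq> negv Y" "e \<in> sep X Y"
  shows "\<exists>Z\<in>C. Z e = Zer \<and> (\<forall>g. Z g = Pos \<longrightarrow> X g = Pos \<or> Y g = Pos) \<and> (\<forall>g. Z g = Neg \<longrightarrow> X g = Neg \<or> Y g = Neg)"
proof -
  have H: "\<forall>X\<in>C. \<forall>Y\<in>C. \<forall>e. X \<noteq> negv Y \<and> e \<in> sep X Y \<longrightarrow>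
        (\<exists>Z\<in>C. Z e = Zer \<and> (\<forall>g. Z g = Pos \<longrightarrow> X g = Pos \<or> Y g = Pos)
                          \<and> (\<forall>g. Z g = Neg \<longrightarrow> X g = Neg \<or> Y g = Neg))" by (rule om_parts(6)[OF assms(1)])
  show ?thesis using H[rule_format, OF assms(2,3)] assms(4,5) by blast
qed

lemma sc_zero: "(\<forall>g. Z g = Pos \<longrightarrow> X g = Pos \<or> Y g = Pos) \<Longrightarrow> (\<forall>g. Z g = Neg \<longrightarrow> X g = Neg \<or> Y g = Neg)
   \<Longrightarrow> X g = Zer \<Longrightarrow> Y g = Zer \<Longrightarrow> Z g = Zer"
  by (cases "Z g") auto
lemma sc_val: "(\<forall>g. Z g = Pos \<longrightarrow> X g = Pos \<or> Y g = Pos) \<Longrightarrow> (\<forall>g. Z g = Neg \<longrightarrow> X g = Neg \<or> Y g = Neg)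
   \<Longrightarrow> Z g \<noteq> Zer \<Longrightarrow> Z g = X g \<or> Z g = Y g"
  by (cases "Z g") auto

lemma basis_exists:
  assumes OM: "oriented_matroid E C" shows "\<exists>B. is_basis E C B"
proof -
  let ?T = "{B. B \<subseteq> E \<and> (\<forall>X\<in>C. B \<inter> supp X \<noteq> {})}"
  have fin: "finite E" using om_parts(1)[OF OM] .
  have "E \<in> ?T"
  proof (simp, intro ballI)
    fix X assume X: "X \<in> C"
    have "X \<noteq> zerov" using om_parts(3)[OF OM] X by auto
    then obtain e where e: "X e \<noteq> Zer" by (auto simp: zerov_def)
    then have "e \<in> E" using om_in[OF OM X] by blast
    then show "E \<inter> supp X \<noteq> {}" using e by (auto simp: supp_def)
  qed
  then have "\<exists>B. B \<in> ?T \<and> (\<forall>y. y \<in> ?T \<longrightarrow> card B \<le> card y)" by (rule ex_has_least_nat)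
  then obtain B where B: "B \<in> ?T" and Bmin: "\<And>B'. B' \<in> ?T \<Longrightarrow> card B \<le> card B'"
    by auto
  have BE: "B \<subseteq> E" using B by simp
  have finB: "finite B" using BE fin by (rule finite_subset)
  have "is_basis E C B"
    unfolding is_basis_def
  proof (intro conjI allI impI)
    show "B \<subseteq> E" using B by simp
    show "\<forall>X\<in>C. B \<inter> supp X \<noteq> {}" using B by simp
    fix B' assume BB: "B' \<subset> B"
    have lt: "card B' < card B" by (rule psubset_card_mono[OF finB BB])
    have B'E: "B' \<subseteq> E" using BB BE by auto
    show "\<exists>X\<in>C. B' \<inter> supp X = {}"
    proof (rule ccontr)
      assume "\<not> (\<exists>X\<in>C. B' \<inter> supp X = {})"
      then have "B' \<in> ?T" using B'E by auto
      then have "card B \<le> card B'" by (rule Bmin)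
      then show False using lt by simp
    qed
  qed
  then show ?thesis by blast
qed

lemma indep_sub: "indep E C J \<Longrightarrow> J \<subseteq> E"
  by (auto simp: indep_def is_basis_def)

lemma mrank_fin: "oriented_matroid E C \<Longrightarrow> finite {J. J \<subseteq> A \<and> indep E C J}"
proof -
  assume OM: "oriented_matroid E C"
  have "finite (Pow E)" using om_parts(1)[OF OM] by simp
  moreover have "{J. J \<subseteq> A \<and> indep E C J} \<subseteq> Pow E" using indep_sub by blast
  ultimately show ?thesis by (rule finite_subset[rotated])
qed

lemma mrank_ge: "oriented_matroid E C \<Longrightarrow> J \<subseteq> A \<Longrightarrow> indep E C J \<Longrightarrow> card J \<le> mrank E C A"
  unfolding mrank_def by (rule Max_ge) (auto intro: mrank_fin)

lemma mrank_attained: assumes OM: "oriented_matroid E C"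
  shows "\<exists>J. J \<subseteq> A \<and> indep E C J \<and> card J = mrank E C A"
proof -
  obtain B where "is_basis E C B" using basis_exists[OF OM] by blast
  then have "indep E C {}" by (auto simp: indep_def)
  then have ne: "card ` {J. J \<subseteq> A \<and> indep E C J} \<noteq> {}" by blast
  have "mrank E C A \<in> card ` {J. J \<subseteq> A \<and> indep E C J}"
    unfolding mrank_def by (rule Max_in) (use ne mrank_fin[OF OM] in auto)
  then show ?thesis by auto
qed

lemma mrank_mono: "oriented_matroid E C \<Longrightarrow> A \<subseteq> A' \<Longrightarrow> mrank E C A \<le> mrank E C A'"
proof -
  assume OM: "oriented_matroid E C" and A: "A \<subseteq> A'"
  obtain J where "J \<subseteq> A" "indep E C J" "card J = mrank E C A" using mrank_attained[OF OM] by blast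
  then show ?thesis using mrank_ge[OF OM, of J A'] A by auto
qed

lemma basis_card: "oriented_matroid E C \<Longrightarrow> is_basis E C B \<Longrightarrow> card B \<le> om_rank E C"
  unfolding om_rank_def by (erule mrank_ge) (auto simp: is_basis_def indep_def)


lemma negv_negv[simp]: "negv (negv X) = X" by (rule ext) simp

lemma unique_zero:
  assumes OM: "oriented_matroid E C" and Z1: "Z1 \<in> C" and Z2: "Z2 \<in> C"
    and z1: "\<forall>g\<in>G. Z1 g = Zer" and z2: "\<forall>g\<in>G. Z2 g = Zer"
    and rk: "om_rank E C \<le> mrank E C G + 1"
  shows "Z1 = Z2 \<or> Z1 = negv Z2"
proof (rule ccontr)
  assume ne: "\<not> (Z1 = Z2 \<or> Z1 = negv Z2)"
  obtain J where J: "J \<subseteq> G" "indep E C J" "card J = mrank E C G"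
    using mrank_attained[OF OM] by blast
  obtain B where B: "is_basis E C B" "J \<subseteq> B" using J(2) unfolding indep_def by blast
  have BE: "B \<subseteq> E" using B(1) unfolding is_basis_def by blast
  have finB: "finite B" using BE om_parts(1)[OF OM] by (rule finite_subset)
  have finJ: "finite J" using B(2) finB by (rule finite_subset)
  have cB: "card B \<le> card J + 1" using basis_card[OF OM B(1)] J(3) rk by simp
  have tr: "\<forall>X\<in>C. B \<inter> supp X \<noteq> {}" using B(1) unfolding is_basis_def by blast
  have one: "x = y" if "x \<in> B" "y \<in> B" "x \<notin> J" "y \<notin> J" for x y
  proof (rule ccontr)
    assume "x \<noteq> y"
    have "insert x (insert y J) \<subseteq> B" using B(2) that by blast
    then have "card (insert x (insert y J)) \<le> card B" by (rule card_mono[OF finB])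
    moreover have "card (insert x (insert y J)) = card J + 2" using finJ that \<open>x \<noteq> y\<close> by simp
    ultimately show False using cB by simp
  qed
  obtain b1 where b1: "b1 \<in> B" "Z1 b1 \<noteq> Zer" using tr Z1 by (auto simp: supp_def)
  obtain b2 where b2: "b2 \<in> B" "Z2 b2 \<noteq> Zer" using tr Z2 by (auto simp: supp_def)
  have "b1 \<notin> J" using b1 z1 J(1) by blast
  have "b2 \<notin> J" using b2 z2 J(1) by blast
  have "b1 = b2" by (rule one) fact+
  have BJ: "x \<in> J \<or> x = b1" if "x \<in> B" for x using one[OF that b1(1) _ \<open>b1 \<notin> J\<close>] by blast
  have "\<exists>W\<in>C. W b1 = Zer \<and> (\<forall>g\<in>G. W g = Zer)"
  proof (cases "Z1 b1 = neg_sign (Z2 b1)")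
    case True
    have "Z1 \<noteq> negv Z2" using ne by blast
    moreover have "b1 \<in> sep Z1 Z2" using True b1 by (simp add: sep_def)
    ultimately obtain W where W: "W \<in> C" "W b1 = Zer" "\<forall>g. W g = Pos \<longrightarrow> Z1 g = Pos \<or> Z2 g = Pos"
      "\<forall>g. W g = Neg \<longrightarrow> Z1 g = Neg \<or> Z2 g = Neg"
      using om_elim[OF OM Z1 Z2] by blast
    have "\<forall>g\<in>G. W g = Zer"
    proof
      fix g assume "g \<in> G"
      then show "W g = Zer" using sc_zero[OF W(3) W(4)] z1 z2 by blast
    qed
    then show ?thesis using W by blast
  next
    case False
    have nZ2: "negv Z2 \<in> C" by (rule om_negv[OF OM Z2])
    have "Z1 \<noteq> negv (negv Z2)" using ne by simp
    moreover have "b1 \<in> sep Z1 (negv Z2)" using False b1 \<open>b1 = b2\<close> b2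
      by (cases "Z1 b1"; cases "Z2 b1") (auto simp: sep_def)
    ultimately obtain W where W: "W \<in> C" "W b1 = Zer" "\<forall>g. W g = Pos \<longrightarrow> Z1 g = Pos \<or> negv Z2 g = Pos"
      "\<forall>g. W g = Neg \<longrightarrow> Z1 g = Neg \<or> negv Z2 g = Neg"
      using om_elim[OF OM Z1 nZ2] by blast
    have "\<forall>g\<in>G. W g = Zer"
    proof
      fix g assume g: "g \<in> G"
      have "negv Z2 g = Zer" using z2 g by simp
      then show "W g = Zer" using sc_zero[OF W(3) W(4)] z1 g by blast
    qed
    then show ?thesis using W by blast
  qed
  then obtain W where W: "W \<in> C" "W b1 = Zer" "\<forall>g\<in>G. W g = Zer" by blast
  have "B \<inter> supp W = {}"
  proof (rule equals0I)
    fix x assume "x \<in> B \<inter> supp W"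
    then have "x \<in> B" "W x \<noteq> Zer" by (auto simp: supp_def)
    then show False using BJ W J(1) by blast
  qed
  then show False using tr W(1) by blast
qed

lemma idx_props:
  assumes "cc_index I V = i" "1 \<le> i" "i \<le> length I"
  shows "V (I!(i-1)) \<noteq> Zer" "\<forall>l<i-1. V (I!l) = Zer"
proof -
  have ex: "\<exists>l<length I. V (I!l) \<noteq> Zer"
  proof (rule ccontr)
    assume "\<not> (\<exists>l<length I. V (I!l) \<noteq> Zer)"
    then have "cc_index I V = Suc (length I)" unfolding cc_index_def by auto
    then show False using assms by simp
  qed
  define L where "L = (LEAST l. l < length I \<and> V (I!l) \<noteq> Zer)"
  have ci: "i = Suc L" using assms(1) ex by (simp add: cc_index_def L_def)
  have PL: "L < length I \<and> V (I!L) \<noteq> Zer" unfolding L_def using ex by (rule LeastI_ex)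
  then show "V (I!(i-1)) \<noteq> Zer" using ci by simp
  show "\<forall>l<i-1. V (I!l) = Zer"
  proof (intro allI impI)
    fix l assume "l < i - 1"
    then have lL: "l < L" using ci by simp
    then have "\<not> (l < length I \<and> V (I!l) \<noteq> Zer)" unfolding L_def by (rule not_less_Least)
    then show "V (I!l) = Zer" using lL PL by simp
  qed
qed

lemma lex_sigma_at:
  assumes "m < length I" "V (I!m) \<noteq> Zer" "\<forall>l<m. V (I!l) = Zer"
  shows "lex_sigma I V = V (I!m)"
proof -
  have ex: "\<exists>l<length I. V (I!l) \<noteq> Zer" using assms by blast
  have L: "(LEAST l. l < length I \<and> V (I!l) \<noteq> Zer) = m"
  proof (rule Least_equality)
    show "m < length I \<and> V (I!m) \<noteq> Zer" using assms by simp
    fix y assume "y < length I \<and> V (I!y) \<noteq> Zer"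
    then show "m \<le> y" using assms(3) not_less by blast
  qed
  then have "cc_index I V = Suc m" using ex by (simp add: cc_index_def)
  then show ?thesis using assms(1) by (simp add: lex_sigma_def)
qed

lemma lex_sigma_negv: "lex_sigma I (negv V) = neg_sign (lex_sigma I V)"
proof -
  have "cc_index I (negv V) = cc_index I V" unfolding cc_index_def negv_app neg_sign_Zer_iff by (rule refl)
  then show ?thesis by (simp add: lex_sigma_def)
qed

lemma lexW:
  assumes pE: "p \<notin> E" and OM': "oriented_matroid (insert p E) C'"
    and del: "deletion_cocircuits E C' = C"
    and extc: "\<forall>Y\<in>C. ext_vec E p Y (lex_sigma I Y) \<in> C'"
    and W: "W \<in> C'" and Wnz: "restr E W \<noteq> zerov"
    and A: "\<And>W'. W' \<in> C' \<Longrightarrow> supp W' \<subseteq> insert p (supp W) \<Longrightarrow> W' = W \<or> W' = negv W"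
  shows "W p = lex_sigma I (restr E W)"
proof -
  define D where "D = {restr E X | X. X \<in> C' \<and> restr E X \<noteq> zerov}"
  have delD: "deletion_cocircuits E C' = {V \<in> D. \<forall>W\<in>D. supp W \<subseteq> supp V \<longrightarrow> supp W = supp V}"
    unfolding deletion_cocircuits_def D_def Let_def by (rule refl)
  have WD: "restr E W \<in> D" using W Wnz unfolding D_def by blast
  let ?M = "{V \<in> D. supp V \<subseteq> supp (restr E W)}"
  have "restr E W \<in> ?M" using WD by simp
  then have "\<exists>V. V \<in> ?M \<and> (\<forall>y. y \<in> ?M \<longrightarrow> card (supp V) \<le> card (supp y))" using ex_has_least_nat[where P = "\<lambda>V. V \<in> ?M" and m = "\<lambda>V. card (supp V)"] by blast
  then obtain V where V1: "V \<in> ?M" and V2: "\<forall>y. y \<in> ?M \<longrightarrow> card (supp V) \<le> card (supp y)"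
    by (elim exE conjE)
  have VD: "V \<in> D" using V1 by simp
  have Vs: "supp V \<subseteq> supp (restr E W)" using V1 by simp
  have Vmin: "card (supp V) \<le> card (supp y)" if "y \<in> D" "supp y \<subseteq> supp (restr E W)" for y
    using V2 that by simp
  have fin: "finite E" using om_parts(1)[OF OM'] by simp
  have suppE: "\<And>X. supp (restr E X) \<subseteq> E" by (auto simp: supp_def restr_def)
  obtain X0 where VX: "V = restr E X0" using VD unfolding D_def by blast
  have VE: "\<And>x. x \<notin> E \<Longrightarrow> V x = Zer" using VX by (simp add: restr_def)
  have "supp V \<subseteq> E" using suppE[of X0] VX by simp
  then have finV: "finite (supp V)" using fin by (rule finite_subset)
  have "V \<in> deletion_cocircuits E C'"
    unfolding delD
  proof (simp add: VD, intro ballI impI)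
    fix W' assume W'D: "W' \<in> D" and sub: "supp W' \<subseteq> supp V"
    have "card (supp V) \<le> card (supp W')" by (rule Vmin[OF W'D order_trans[OF sub Vs]])
    moreover have "card (supp W') \<le> card (supp V)" by (rule card_mono[OF finV sub])
    ultimately have "card (supp W') = card (supp V)" by simp
    then show "supp W' = supp V" using card_subset_eq[OF finV sub] by simp
  qed
  then have VC: "V \<in> C" using del by simp
  let ?e = "ext_vec E p V (lex_sigma I V)"
  have eC: "?e \<in> C'" by (rule bspec[OF extc VC])
  have "supp ?e \<subseteq> insert p (supp W)"
  proof
    fix x assume "x \<in> supp ?e"
    then have ex: "?e x \<noteq> Zer" by (simp add: supp_def)
    show "x \<in> insert p (supp W)"
    proof (cases "x \<in> E")
      case True
      then have "V x \<noteq> Zer" using ex by (simp add: ext_vec_def)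
      then have "x \<in> supp (restr E W)" using Vs by (auto simp: supp_def)
      then show ?thesis by (auto simp: supp_def restr_def split: if_splits)
    next
      case False
      then have "x = p" using ex by (auto simp: ext_vec_def split: if_splits)
      then show ?thesis by simp
    qed
  qed
  then have cases: "?e = W \<or> ?e = negv W" by (rule A[OF eC])
  then show ?thesis
  proof
    assume h: "?e = W"
    have "restr E W = V"
    proof (rule ext)
      fix x
      have "W x = ?e x" using h by simp
      then show "restr E W x = V x" using VE by (auto simp: restr_def ext_vec_def)
    qed
    moreover have "W p = ?e p" using h by simp
    ultimately show ?thesis using pE by (simp add: ext_vec_def)
  next
    assume h: "?e = negv W"
    then have h': "W = negv ?e" by simp
    have "restr E W = negv V"
    proof (rule ext)
      fix x
      have "W x = negv ?e x" using h' by simp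
      then show "restr E W x = negv V x" using VE by (auto simp: restr_def ext_vec_def)
    qed
    moreover have "W p = negv ?e p" using h' by simp
    ultimately show ?thesis using pE by (simp add: ext_vec_def lex_sigma_negv)
  qed
qed


theorem lemma3p6:
  fixes E :: "'e set" and C C' :: "'e svec set" and p f :: 'e and I :: "'e list"
    and X Y :: "'e svec" and r i j :: nat
  assumes OM: "oriented_matroid E C"
    and rk: "r = om_rank E C"
    and fE: "f \<in> E"
    and I_dist: "distinct I" and I_sub: "set I \<subseteq> E" and I_ind: "indep E C (set I)"
    and k_le: "length I \<le> r"
    and ext: "lex_extension E C I p C'"
    and XC: "X \<in> C'" and YC: "Y \<in> C'"
    and conf: "conformal X Y"
    and Xp: "X p = Y p" "X p \<noteq> Zer"
    and edge: "is_edge (insert p E) C' (comp X Y)"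
    and Yf: "Y f \<noteq> Zer"
    and ij: "i = cc_index I X" "j = cc_index I Y" "1 \<le> i" "i < j" "j \<le> length I"
  shows "Dir C' p f X Y = Dir C' (I ! (i - 1)) f X Y \<and> Dir C' (I ! (i - 1)) f X Y = Y f"
proof -
  have SE: "single_element_extension E C p (lex_sigma I) C'" using ext by (simp add: lex_extension_def)
  have pE: "p \<notin> E" using SE by (simp add: single_element_extension_def)
  have OM': "oriented_matroid (insert p E) C'" using SE by (simp add: single_element_extension_def)
  have del: "deletion_cocircuits E C' = C" using SE by (simp add: single_element_extension_def)
  have extc: "\<forall>Y\<in>C. ext_vec E p Y (lex_sigma I Y) \<in> C'" using SE by (simp add: single_element_extension_def)
  define m where "m = i - 1"
  define a where "a = I ! m"
  have mlt: "m < length I" using ij by (simp add: m_def)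
  have IE: "I ! l \<in> E" if "l < length I" for l using I_sub that nth_mem by blast
  have aE: "a \<in> E" unfolding a_def by (rule IE[OF mlt])
  have il: "i \<le> length I" using ij by simp
  have jl: "1 \<le> j" using ij by simp
  have Xa: "X a \<noteq> Zer" using idx_props(1)[OF ij(1)[symmetric] ij(3) il] by (simp add: a_def m_def)
  have Xl: "\<forall>l<m. X (I!l) = Zer" using idx_props(2)[OF ij(1)[symmetric] ij(3) il] by (simp add: m_def)
  have Yl0: "\<forall>l<j-1. Y (I!l) = Zer" using idx_props(2)[OF ij(2)[symmetric] jl ij(5)] .
  have mj: "m < j - 1" using ij by (simp add: m_def)
  have Ya: "Y a = Zer" using Yl0 mj by (simp add: a_def)
  have Yl: "\<forall>l<m. Y (I!l) = Zer" using Yl0 mj by simp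
  have ia: "I ! (i - 1) = a" by (simp add: a_def m_def)
  have partB: "Dir C' a f X Y = Y f" using Xa Ya by (simp add: Dir_def)
  let ?E' = "insert p E"
  let ?F = "zset ?E' (comp X Y)"
  have flat: "is_flat ?E' C' ?F" using edge by (simp add: is_edge_def)
  have rkF: "mrank ?E' C' ?F + 2 = om_rank ?E' C'" using edge by (simp add: is_edge_def)
  have RK: "om_rank ?E' C' \<le> mrank ?E' C' G + 1"
    if h1: "h \<in> ?E'" and h2: "comp X Y h \<noteq> Zer" and h3: "insert h ?F \<subseteq> G" for h G
  proof -
    have "h \<in> ?E' - ?F" using h1 h2 by (simp add: zset_def)
    then have "mrank ?E' C' (insert h ?F) > mrank ?E' C' ?F" using flat by (simp add: is_flat_def)
    moreover have "mrank ?E' C' (insert h ?F) \<le> mrank ?E' C' G" by (rule mrank_mono[OF OM' h3])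
    ultimately show ?thesis using rkF by simp
  qed
  have Fz: "X g = Zer \<and> Y g = Zer" if "g \<in> ?F" for g
    using that by (auto simp: zset_def comp_def split: if_splits)
  have Ssep: "h \<in> sep (negv X) Y \<longleftrightarrow> X h \<noteq> Zer \<and> X h = Y h" for h
    by (simp add: sep_def)
  have cf: "\<not> (X h \<noteq> Zer \<and> X h = neg_sign (Y h))" for h
    using conf by (auto simp: conformal_def sep_def)
  have nXC: "negv X \<in> C'" by (rule om_negv[OF OM' XC])
  have nXY: "negv X \<noteq> negv Y"
  proof
    assume "negv X = negv Y"
    then have "negv (negv X) = negv (negv Y)" by simp
    then have "X = Y" by simp
    then show False using Xa Ya by simp
  qed
  have psep: "p \<in> sep (negv X) Y" using Xp by (simp add: sep_def)
  obtain Z0 where Z0C: "Z0 \<in> C'" and Z0p: "Z0 p = Zer"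
    and sP: "\<forall>g. Z0 g = Pos \<longrightarrow> negv X g = Pos \<or> Y g = Pos"
    and sN: "\<forall>g. Z0 g = Neg \<longrightarrow> negv X g = Neg \<or> Y g = Neg"
    using om_elim[OF OM' nXC YC nXY psep] by blast
  have Z00: "Z0 h = Zer" if "X h = Zer" "Y h = Zer" for h
    by (rule sc_zero[OF sP sN]) (use that in simp_all)
  have Z0F: "\<forall>g\<in>?F. Z0 g = Zer" using Fz Z00 by blast
  have YF: "\<forall>g\<in>?F. Y g = Zer" using Fz by blast
  have XF: "\<forall>g\<in>?F. X g = Zer" using Fz by blast
  have P0: "Z0 h = comp (negv X) Y h" if hS: "h \<notin> sep (negv X) Y" for h
  proof (cases "X h = Zer")
    case True
    show ?thesis
    proof (cases "Y h = Zer")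
      case True
      then show ?thesis using \<open>X h = Zer\<close> Z00 by (simp add: comp_def)
    next
      case False
      have hE: "h \<in> ?E'" by (rule om_in[OF OM' YC False])
      have "Z0 h \<noteq> Zer"
      proof
        assume z: "Z0 h = Zer"
        have "om_rank ?E' C' \<le> mrank ?E' C' (insert h ?F) + 1"
          by (rule RK[OF hE]) (use False \<open>X h = Zer\<close> in \<open>simp_all add: comp_def\<close>)
        moreover have "\<forall>g\<in>insert h ?F. Z0 g = Zer" using z Z0F by simp
        moreover have "\<forall>g\<in>insert h ?F. X g = Zer" using \<open>X h = Zer\<close> XF by simp
        ultimately have "Z0 = X \<or> Z0 = negv X" using unique_zero[OF OM' Z0C XC] by blast
        then show False using Z0p Xp by auto
      qed
      then have "Z0 h = negv X h \<or> Z0 h = Y h" using sc_val[OF sP sN] by blast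
      then show ?thesis using \<open>X h = Zer\<close> \<open>Z0 h \<noteq> Zer\<close> by (auto simp: comp_def)
    qed
  next
    case False
    have Yh: "Y h = Zer"
    proof (rule ccontr)
      assume Yh: "Y h \<noteq> Zer"
      have "X h \<noteq> neg_sign (Y h)" using cf False by blast
      then have "X h = Y h" using False Yh by (cases "X h"; cases "Y h") auto
      then show False using hS False Ssep by blast
    qed
    have hE: "h \<in> ?E'" by (rule om_in[OF OM' XC False])
    have "Z0 h \<noteq> Zer"
    proof
      assume z: "Z0 h = Zer"
      have "om_rank ?E' C' \<le> mrank ?E' C' (insert h ?F) + 1"
        by (rule RK[OF hE]) (use False in \<open>simp_all add: comp_def\<close>)
      moreover have "\<forall>g\<in>insert h ?F. Z0 g = Zer" using z Z0F by simp
      moreover have "\<forall>g\<in>insert h ?F. Y g = Zer" using Yh YF by simp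
      ultimately have "Z0 = Y \<or> Z0 = negv Y" using unique_zero[OF OM' Z0C YC] by blast
      then show False using Z0p Xp by auto
    qed
    then have "Z0 h = negv X h \<or> Z0 h = Y h" using sc_val[OF sP sN] by blast
    then show ?thesis using False Yh \<open>Z0 h \<noteq> Zer\<close> by (auto simp: comp_def)
  qed
  have aS: "a \<notin> sep (negv X) Y" using Ya Ssep by simp
  have Z0a: "Z0 a = neg_sign (X a)" using P0[OF aS] Xa by (simp add: comp_def)
  have pF: "p \<notin> ?F" using Xp by (simp add: zset_def comp_def)
  have uniq: "Z = Z0" if ZC: "Z \<in> C'" and Zp: "Z p = Zer"
    and ZP: "\<forall>h. h \<notin> sep (negv X) Y \<longrightarrow> Z h = comp (negv X) Y h" for Z
  proof -
    have ZF: "\<forall>g\<in>?F. Z g = Zer"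
    proof
      fix g assume "g \<in> ?F"
      then have "X g = Zer" "Y g = Zer" using Fz by auto
      then show "Z g = Zer" using ZP Ssep by (simp add: comp_def)
    qed
    have "om_rank ?E' C' \<le> mrank ?E' C' (insert p ?F) + 1"
      by (rule RK[of p]) (use Xp in \<open>simp_all add: comp_def\<close>)
    moreover have "\<forall>g\<in>insert p ?F. Z g = Zer" using Zp ZF by simp
    moreover have "\<forall>g\<in>insert p ?F. Z0 g = Zer" using Z0p Z0F by simp
    ultimately have "Z = Z0 \<or> Z = negv Z0" using unique_zero[OF OM' ZC Z0C] by blast
    moreover have "Z a = Z0 a" using ZP aS P0[OF aS] by simp
    moreover have "Z0 a \<noteq> Zer" using Z0a Xa by simp
    ultimately show ?thesis
    proof (elim disjE)
      assume "Z = negv Z0" "Z a = Z0 a" "Z0 a \<noteq> Zer"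
      then have "neg_sign (Z0 a) = Z0 a" by simp
      then show ?thesis using \<open>Z0 a \<noteq> Zer\<close> by (simp add: neg_sign_fix)
    qed
  qed
  have elimZ: "elim C' p (negv X) Y = Z0"
    unfolding elim_def
  proof (rule the_equality)
    show "Z0 \<in> C' \<and> Z0 p = Zer \<and> (\<forall>h. h \<notin> sep (negv X) Y \<longrightarrow> Z0 h = comp (negv X) Y h)"
      using Z0C Z0p P0 by blast
    fix Z assume "Z \<in> C' \<and> Z p = Zer \<and> (\<forall>h. h \<notin> sep (negv X) Y \<longrightarrow> Z h = comp (negv X) Y h)"
    then show "Z = Z0" using uniq by blast
  qed
  have dirp: "Dir C' p f X Y = Z0 f" using Xp elimZ by (simp add: Dir_def)
  have Z0l: "\<forall>l<m. Z0 (I!l) = Zer" using Xl Yl Z00 by blast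
  have fpne: "f \<noteq> p" using fE pE by blast
  have fF: "comp X Y f \<noteq> Zer" using Yf by (simp add: comp_def)
  have fE': "f \<in> ?E'" using fE by simp
  have UF: "W' = W \<or> W' = negv W"
    if WC: "W \<in> C'" and W'C: "W' \<in> C'" and Wf: "W f = Zer" and WF: "\<forall>g\<in>?F. W g = Zer"
      and sub: "supp W' \<subseteq> insert p (supp W)" for W W'
  proof -
    have "om_rank ?E' C' \<le> mrank ?E' C' (insert f ?F) + 1" by (rule RK[OF fE' fF]) simp
    moreover have Wz: "\<forall>g\<in>insert f ?F. W g = Zer" using Wf WF by simp
    moreover have "\<forall>g\<in>insert f ?F. W' g = Zer"
    proof
      fix g assume g: "g \<in> insert f ?F"
      have "g \<noteq> p" using g fpne pF by auto
      moreover have "W g = Zer" using Wz g by blast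
      then have "g \<notin> supp W" by (simp add: supp_def)
      ultimately have "g \<notin> supp W'" using sub by blast
      then show "W' g = Zer" by (simp add: supp_def)
    qed
    ultimately show ?thesis using unique_zero[OF OM' W'C WC] by blast
  qed
  have restrI: "restr E V (I!l) = V (I!l)" if "l < length I" for V l
    using IE[OF that] by (simp add: restr_def)
  have restr_nz: "restr E V \<noteq> zerov" if "V a \<noteq> Zer" for V
  proof
    assume "restr E V = zerov"
    then have "restr E V a = Zer" by (simp add: zerov_def)
    then show False using that aE by (simp add: restr_def)
  qed
  have lexa: "lex_sigma I (restr E V) = V a" if "V a \<noteq> Zer" "\<forall>l<m. V (I!l) = Zer" for V
  proof -
    have "lex_sigma I (restr E V) = restr E V (I!m)"
      by (rule lex_sigma_at[OF mlt]) (use that restrI mlt in \<open>simp_all add: a_def\<close>)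
    then show ?thesis using restrI[OF mlt] by (simp add: a_def)
  qed
  have Xpa: "X p = X a"
  proof -
    have "X p = lex_sigma I (restr E X)"
    proof (rule lexW[OF pE OM' del extc XC restr_nz[of X, OF Xa]])
      fix W' assume "W' \<in> C'" "supp W' \<subseteq> insert p (supp X)"
      moreover have "insert p (supp X) = supp X" using Xp by (auto simp: supp_def)
      ultimately show "W' = X \<or> W' = negv X" using om_supp[OF OM'] XC by auto
    qed
    then show ?thesis using lexa[of X, OF Xa Xl] by simp
  qed
  have key: "Z0 f = Y f"
  proof (cases "f \<in> sep (negv X) Y")
    case False
    have "X f = Zer"
    proof (rule ccontr)
      assume Xf: "X f \<noteq> Zer"
      have "X f \<noteq> neg_sign (Y f)" using cf Xf by blast
      then have "X f = Y f" using Xf Yf by (cases "X f"; cases "Y f") auto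
      then show False using False Xf Ssep by blast
    qed
    then show ?thesis using P0[OF False] by (simp add: comp_def)
  next
    case True
    have Z0an: "Z0 a \<noteq> Zer" using Z0a Xa by simp
    show ?thesis
    proof (rule ccontr)
      assume ne: "Z0 f \<noteq> Y f"
      show False
      proof (cases "Z0 f = Zer")
        case True
        have "Z0 p = lex_sigma I (restr E Z0)"
        proof (rule lexW[OF pE OM' del extc Z0C restr_nz[of Z0, OF Z0an]])
          fix W' assume "W' \<in> C'" "supp W' \<subseteq> insert p (supp Z0)"
          then show "W' = Z0 \<or> W' = negv Z0" using UF[OF Z0C _ True Z0F] by blast
        qed
        then have "Z0 p = Z0 a" using lexa[of Z0, OF Z0an Z0l] by simp
        then show False using Z0p Z0an by simp
      next
        case False
        have Z0f: "Z0 f = neg_sign (Y f)" using False ne Yf by (cases "Z0 f"; cases "Y f") auto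
        have YnZ: "Y \<noteq> negv Z0"
        proof
          assume "Y = negv Z0"
          then have "Y p = neg_sign (Z0 p)" by simp
          then show False using Z0p Xp by simp
        qed
        have fsep: "f \<in> sep Y Z0" using Z0f Yf by (simp add: sep_def)
        obtain W where WC: "W \<in> C'" and Wf: "W f = Zer"
          and wP: "\<forall>g. W g = Pos \<longrightarrow> Y g = Pos \<or> Z0 g = Pos"
          and wN: "\<forall>g. W g = Neg \<longrightarrow> Y g = Neg \<or> Z0 g = Neg"
          using om_elim[OF OM' YC Z0C YnZ fsep] by blast
        have W0: "W h = Zer" if "Y h = Zer" "Z0 h = Zer" for h
          by (rule sc_zero[OF wP wN]) (use that in simp_all)
        have WF: "\<forall>g\<in>?F. W g = Zer" using YF Z0F W0 by blast
        have Wl: "\<forall>l<m. W (I!l) = Zer" using Yl Z0l W0 by blast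
        have Wa: "W a \<noteq> Zer"
        proof
          assume Wa0: "W a = Zer"
          have aF: "comp X Y a \<noteq> Zer" using Xa by (simp add: comp_def)
          have "om_rank ?E' C' \<le> mrank ?E' C' (insert a ?F) + 1" by (rule RK[of a]) (use aE aF in auto)
          moreover have "\<forall>g\<in>insert a ?F. W g = Zer" using Wa0 WF by simp
          moreover have "\<forall>g\<in>insert a ?F. Y g = Zer" using Ya YF by simp
          ultimately have "W = Y \<or> W = negv Y" using unique_zero[OF OM' WC YC] by blast
          then show False using Wf Yf by auto
        qed
        have WaV: "W a = Z0 a" using sc_val[OF wP wN Wa] Ya Wa by auto
        have "W p = lex_sigma I (restr E W)"
        proof (rule lexW[OF pE OM' del extc WC restr_nz[of W, OF Wa]])
          fix W' assume "W' \<in> C'" "supp W' \<subseteq> insert p (supp W)"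
          then show "W' = W \<or> W' = negv W" using UF[OF WC _ Wf WF] by blast
        qed
        then have Wp: "W p = neg_sign (X p)" using lexa[of W, OF Wa Wl] WaV Z0a Xpa by simp
        show False
        proof (cases "W p = Zer")
          case True
          then show False using Wp Xp by simp
        next
          case False
          then have "W p = Y p \<or> W p = Z0 p" using sc_val[OF wP wN] by blast
          then have "W p = X p" using Z0p False Xp by auto
          then show False using Wp Xp by (simp add: neg_sign_fix)
        qed
      qed
    qed
  qed
  show ?thesis using partB dirp key ia by simp
qed

end
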